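(* Let $U$ and $V$ be distinct Euclidean discs in $\mathbb{C}$ with centres $u,v$ and radii $r,s$ respectively, with $V\subset U$. Suppose that for some point $z\in\Pi(U)$, $$\frac{r}{s}<\min\left\{2,\ 1+\tfrac18\sinh\rho(z,\Pi(V))\right\}.$$ Then $h(z)<s/2$. Moreover, if $w$ is the point of $\Pi(V)$ with $h(w)=h(z)$ that is closest in Euclidean distance to $z$, then $|z-w|<3(r-s)$.
   Context: $\mathbb{H}^3=\{(x,y,t)\in\mathbb{R}^3:t>0\}$ with the hyperbolic metric $\rho$ given by the density $ds/t$, and $\mathbb{C}$ is identified with the plane $t=0$. For $z=(x,y,t)\in\mathbb{H}^3$, $h(z)=t$. For a Euclidean disc $D\subset\mathbb{C}$ with centre $c$ and radius $r$, $\Pi(D)=\{z\in\mathbb{H}^3:|z-c|=r\}$ is the hyperbolic plane (hemisphere) over $D$; $\rho(z,\Pi(V))$ is the hyperbolic distance from $z$ to this plane. $|\cdot|$ is the Euclidean norm in $\mathbb{R}^3$. *)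

theory Defs
  imports "HOL-Analysis.Analysis"
begin

text \<open>Points of R^3 are modelled as pairs (x + i y, t) :: complex \<times> real; the product norm
  is the Euclidean norm sqrt(x^2+y^2+t^2). The complex plane is the plane t = 0.\<close>

type_synonym pt3 = "complex \<times> real"

definition H3 :: "pt3 set" where
  "H3 = {p. snd p > 0}"

definition hgt :: "pt3 \<Rightarrow> real" where
  "hgt p = snd p"

definition emb :: "complex \<Rightarrow> pt3" where
  "emb c = (c, 0)"

text \<open>Hyperbolic distance for the metric ds/t on the upper half-space (standard closed form).\<close>
definition hdist :: "pt3 \<Rightarrow> pt3 \<Rightarrow> real" where
  "hdist p q = arcosh (1 + (norm (p - q))\<^sup>2 / (2 * hgt p * hgt q))"

definition Pi_disc :: "complex \<Rightarrow> real \<Rightarrow> pt3 set" where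
  "Pi_disc c r = {p \<in> H3. norm (p - emb c) = r}"

definition hdist_set :: "pt3 \<Rightarrow> pt3 set \<Rightarrow> real" where
  "hdist_set p S = (INF q\<in>S. hdist p q)"

end

theory Submission
  imports Defs
begin

lemma alg:
  fixes a t s R2 W k tau :: real
  assumes "a \<ge> 0" "t > 0" "s > 0"
  assumes R2: "R2 = a ^ 2 + t ^ 2"
  assumes W: "W = sqrt ((R2 - s ^ 2) ^ 2 + 4 * s ^ 2 * t ^ 2)"
  assumes k: "k = 2 * s ^ 2 / (R2 + s ^ 2)"
  assumes tau: "tau = s * W / (R2 + s ^ 2)"
  shows "k ^ 2 * a ^ 2 + tau ^ 2 = s ^ 2" and "tau > 0"
    and "1 + ((1 - k) ^ 2 * a ^ 2 + (t - tau) ^ 2) / (2 * t * tau) = W / (2 * t * s)"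
proof -
  have W2: "W ^ 2 = (R2 - s ^ 2) ^ 2 + 4 * s ^ 2 * t ^ 2" unfolding W by simp
  have "(R2 - s ^ 2) ^ 2 + 4 * s ^ 2 * t ^ 2 > 0" using assms by (simp add: add_nonneg_pos)
  then have Wp: "W > 0" unfolding W by simp
  have "t ^ 2 > 0" "s ^ 2 > 0" "a ^ 2 \<ge> 0" using assms by auto
  then have D: "R2 + s ^ 2 > 0" unfolding R2 by linarith
  define N where "N = R2 + s ^ 2"
  have Np: "N > 0" using D N_def by simp
  have kN: "k * N = 2 * s ^ 2" unfolding k N_def using D by simp
  have tN: "tau * N = s * W" unfolding tau N_def using D by simp
  show tp: "tau > 0" unfolding tau using Wp D assms by simp
  have "(k ^ 2 * a ^ 2 + tau ^ 2) * N ^ 2 = (k * N) ^ 2 * a ^ 2 + (tau * N) ^ 2"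
    by (simp add: algebra_simps power2_eq_square)
  also have "\<dots> = s ^ 2 * N ^ 2" unfolding kN tN using W2 R2 N_def
    by (simp add: power_mult_distrib) (simp add: algebra_simps power2_eq_square power4_eq_xxxx)
  finally show "k ^ 2 * a ^ 2 + tau ^ 2 = s ^ 2" using Np by simp
  have "((1 - k) ^ 2 * a ^ 2 + (t - tau) ^ 2 + 2 * t * tau) * N ^ 2
     = (N - k * N) ^ 2 * a ^ 2 + (t * N) ^ 2 + (tau * N) ^ 2"
    by (simp add: algebra_simps power2_eq_square)
  also have "\<dots> = (tau * N) * W * N / s" unfolding kN tN using W2 R2 assms N_def
    by (simp add: power_mult_distrib field_simps) (simp add: algebra_simps power2_eq_square power4_eq_xxxx)
  also have "\<dots> = (tau * W / s) * N ^ 2" by (simp add: power2_eq_square)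
  finally have "(1 - k) ^ 2 * a ^ 2 + (t - tau) ^ 2 + 2 * t * tau = tau * W / s"
    using Np by (metis (no_types, lifting) mult_right_cancel power_not_zero less_irrefl)
  then show "1 + ((1 - k) ^ 2 * a ^ 2 + (t - tau) ^ 2) / (2 * t * tau) = W / (2 * t * s)"
    using tp \<open>t > 0\<close> \<open>s > 0\<close> apply (simp add: field_simps)
    apply (drule arg_cong[where f="\<lambda>x. 2 * t * x"]) by (simp add: algebra_simps)
qed

theorem lemma5p1:
  fixes u v :: complex and r s :: real and z :: pt3
  assumes "r > 0" and "s > 0"
    and "ball v s \<subseteq> ball u r" and "ball v s \<noteq> ball u r"
    and "z \<in> Pi_disc u r"
    and "r / s < min 2 (1 + sinh (hdist_set z (Pi_disc v s)) / 8)"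
  shows "hgt z < s / 2 \<and>
    (\<forall>w. w \<in> Pi_disc v s \<and> hgt w = hgt z \<and>
         (\<forall>w'. w' \<in> Pi_disc v s \<and> hgt w' = hgt z \<longrightarrow> norm (z - w) \<le> norm (z - w'))
         \<longrightarrow> norm (z - w) < 3 * (r - s))"
proof -
  obtain ze t where z: "z = (ze, t)" by (cases z)
  have t: "t > 0" using assms(5) unfolding z Pi_disc_def H3_def by simp
  have "norm (z - emb u) = r" using assms(5) unfolding Pi_disc_def by simp
  then have zr0: "sqrt (cmod (ze - u) ^ 2 + t ^ 2) = r" unfolding z emb_def by (simp add: norm_Pair)
  define P where "P = cmod (ze - u)"
  have zr: "P ^ 2 + t ^ 2 = r ^ 2" using zr0 assms(1) unfolding P_def
    by (metis real_sqrt_pow2 add_nonneg_nonneg zero_le_power2)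
  have P0: "P \<ge> 0" unfolding P_def by simp
  have hz: "hgt z = t" unfolding z hgt_def by simp
  have sub: "dist v u + s \<le> r" using assms(3) ball_subset_ball_iff[of v s u r] assms(2) by auto
  have neq: "\<not> (v = u \<and> s = r)" using assms(4) by auto
  define d where "d = cmod (u - v)"
  have d0: "d \<ge> 0" unfolding d_def by simp
  have dd: "d + s \<le> r" using sub unfolding d_def by (simp add: dist_norm norm_minus_commute)
  have rs: "r > s"
  proof (cases "v = u")
    case True then show ?thesis using neq dd d0 by auto
  next
    case False then have "d > 0" unfolding d_def by simp
    then show ?thesis using dd by simp
  qed
  have r2s: "r < 2 * s" using assms(6) assms(2) by (simp add: divide_less_eq)
  have sinhD: "sinh (hdist_set z (Pi_disc v s)) > 8 * (r - s) / s"
  proof -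
    have "r / s < 1 + sinh (hdist_set z (Pi_disc v s)) / 8" using assms(6) by simp
    then have "r / s - 1 < sinh (hdist_set z (Pi_disc v s)) / 8" by linarith
    moreover have "r / s - 1 = (r - s) / s" using assms(2) by (simp add: field_simps)
    ultimately have "8 * ((r - s) / s) < sinh (hdist_set z (Pi_disc v s))" by linarith
    then show ?thesis by simp
  qed
  define a where "a = cmod (ze - v)"
  have a0: "a \<ge> 0" unfolding a_def by simp
  have aup: "a \<le> P + d" unfolding a_def P_def d_def
    using norm_triangle_ineq[of "ze - u" "u - v"] by simp
  have alo: "P \<le> a + d" unfolding a_def P_def d_def
    using norm_triangle_ineq[of "ze - v" "v - u"] by (simp add: norm_minus_commute)
  define R2 where "R2 = a ^ 2 + t ^ 2"
  have nzv: "norm (z - emb v) = sqrt R2" unfolding z emb_def R2_def a_def by (simp add: norm_Pair)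
  have nuv: "norm (emb u - emb v) = d" unfolding emb_def d_def by (simp add: norm_Pair)
  have nzu: "norm (z - emb u) = r" using zr0 unfolding z emb_def by (simp add: norm_Pair)
  have "norm (z - emb v) \<ge> r - d"
    using norm_triangle_ineq[of "z - emb v" "emb v - emb u"] nzu nuv
    by (simp add: norm_minus_commute)
  then have Rlo: "sqrt R2 \<ge> s" using nzv dd by simp
  have "norm (z - emb v) \<le> r + d"
    using norm_triangle_ineq[of "z - emb u" "emb u - emb v"] nzu nuv by simp
  then have Rup: "sqrt R2 \<le> 2 * r - s" using nzv dd by simp
  have R2nn: "R2 \<ge> 0" unfolding R2_def by simp
  have R2lo: "R2 \<ge> s ^ 2" using Rlo assms(2)
    by (metis R2nn power_mono real_sqrt_pow2 less_imp_le)
  have R2up: "R2 \<le> (2 * r - s) ^ 2" using Rup R2nn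
    by (metis power_mono real_sqrt_ge_zero real_sqrt_pow2)
  have R2up': "R2 - s ^ 2 \<le> 4 * r * (r - s)" using R2up by (simp add: power2_eq_square algebra_simps)
  \<comment> \<open>the foot point\<close>
  define W where "W = sqrt ((R2 - s ^ 2) ^ 2 + 4 * s ^ 2 * t ^ 2)"
  define k where "k = 2 * s ^ 2 / (R2 + s ^ 2)"
  define tau where "tau = s * W / (R2 + s ^ 2)"
  note A = alg[OF a0 t assms(2) R2_def W_def k_def tau_def]
  define q where "q = (v + of_real k * (ze - v), tau)"
  have "norm (q - emb v) = sqrt (k ^ 2 * a ^ 2 + tau ^ 2)"
    unfolding q_def emb_def a_def by (simp add: norm_Pair norm_mult power_mult_distrib)
  then have "norm (q - emb v) = s" using A(1) assms(2) by simp
  then have qin: "q \<in> Pi_disc v s" unfolding Pi_disc_def H3_def q_def using A(2) by simp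
  have "norm (z - q) ^ 2 = (1 - k) ^ 2 * a ^ 2 + (t - tau) ^ 2"
  proof -
    have "ze - (v + of_real k * (ze - v)) = of_real (1 - k) * (ze - v)" by (simp add: algebra_simps)
    moreover have "cmod (1 - complex_of_real k) = \<bar>1 - k\<bar>"
      by (metis norm_of_real of_real_1 of_real_diff)
    ultimately show ?thesis unfolding z q_def a_def
      by (simp add: norm_Pair norm_mult power_mult_distrib)
  qed
  then have hq: "hdist z q = arcosh (W / (2 * t * s))"
    unfolding hdist_def using A(3) hz by (simp add: q_def hgt_def)
  have bdd: "bdd_below ((\<lambda>p. hdist z p) ` Pi_disc v s)"
  proof (rule bdd_belowI[of _ 0], clarify)
    fix p assume "p \<in> Pi_disc v s"
    then have "hgt p > 0" unfolding Pi_disc_def H3_def hgt_def by simp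
    then have "1 + (norm (z - p))\<^sup>2 / (2 * hgt z * hgt p) \<ge> 1" using t hz by simp
    then show "0 \<le> hdist z p" unfolding hdist_def by simp
  qed
  have Dle: "hdist_set z (Pi_disc v s) \<le> arcosh (W / (2 * t * s))"
    unfolding hdist_set_def using cINF_lower[OF bdd qin] hq by simp
  have W2: "W ^ 2 = (R2 - s ^ 2) ^ 2 + 4 * s ^ 2 * t ^ 2" unfolding W_def by simp
  have W0: "W \<ge> 0" unfolding W_def by simp
  have "W ^ 2 \<ge> (2 * t * s) ^ 2" using W2 by (simp add: power_mult_distrib)
  then have "W \<ge> 2 * t * s" using W0 by (simp add: abs_le_square_iff[symmetric] power2_le_iff_abs_le)
  then have W1: "W / (2 * t * s) \<ge> 1" using t assms(2) by simp
  have "(W / (2 * t * s)) ^ 2 - 1 = ((R2 - s ^ 2) / (2 * t * s)) ^ 2"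
    using W2 t assms(2) by (simp add: field_simps power_mult_distrib)
  then have "sinh (arcosh (W / (2 * t * s))) = (R2 - s ^ 2) / (2 * t * s)"
    using sinh_arcosh_real[OF W1] R2lo t assms(2) by simp
  then have "sinh (hdist_set z (Pi_disc v s)) \<le> (R2 - s ^ 2) / (2 * t * s)"
    using Dle by (metis sinh_real_le_iff)
  also have "\<dots> \<le> 4 * r * (r - s) / (2 * t * s)"
    using R2up' t assms(2) by (intro divide_right_mono) simp_all
  finally have "8 * (r - s) / s < 4 * r * (r - s) / (2 * t * s)" using sinhD by simp
  then have "8 * (r - s) / s * (2 * t * s) < 4 * r * (r - s) / (2 * t * s) * (2 * t * s)"
    using t assms(2) by (intro mult_strict_right_mono) simp_all
  moreover have "8 * (r - s) / s * (2 * t * s) = 8 * (r - s) * (2 * t)" using assms(2) by simp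
  moreover have "4 * r * (r - s) / (2 * t * s) * (2 * t * s) = 4 * r * (r - s)" using assms(2) t by simp
  ultimately have "8 * (r - s) * (2 * t) < 4 * r * (r - s)" by simp
  then have "4 * t * (r - s) < r * (r - s)" by (simp add: algebra_simps)
  then have tr: "4 * t < r" using rs by simp
  have ts: "t < s / 2" using tr r2s by simp
  have part2: "norm (z - w) < 3 * (r - s)"
    if w: "w \<in> Pi_disc v s" "hgt w = hgt z"
      "\<forall>w'. w' \<in> Pi_disc v s \<and> hgt w' = hgt z \<longrightarrow> norm (z - w) \<le> norm (z - w')" for w
  proof -
    define b where "b = sqrt (s ^ 2 - t ^ 2)"
    have "t ^ 2 \<le> s ^ 2" using ts t by (intro power_mono) simp_all
    then have b2: "b ^ 2 = s ^ 2 - t ^ 2" unfolding b_def by (metis real_sqrt_pow2 diff_ge_0_iff_ge)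
    have b0: "b \<ge> 0" unfolding b_def using \<open>t ^ 2 \<le> s ^ 2\<close> by simp
    have "t ^ 2 < (s / 2) ^ 2" using ts t by (intro power_strict_mono) simp_all
    moreover have "s * s > 0" using assms(2) by simp
    ultimately have "b ^ 2 > (3 * s / 4) ^ 2" using b2 by (simp add: power2_eq_square)
    then have b34: "b > 3 * s / 4" using b0 by (rule power_less_imp_less_base)
    have "t ^ 2 \<ge> 0" by simp
    then have "P ^ 2 \<le> r ^ 2" using zr by linarith
    then have Pr: "P \<le> r" using assms(1) power2_le_imp_le[of P r] by simp
    have "b ^ 2 \<le> s ^ 2" using b2 \<open>t ^ 2 \<ge> 0\<close> by linarith
    then have bs: "b \<le> s" using assms(2) power2_le_imp_le[of b s] by simp
    have prod: "(P - b) * (P + b) = (r - s) * (r + s)" using zr b2 by (simp add: algebra_simps power2_eq_square)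
    have Pb: "P - b \<ge> r - s"
    proof (rule ccontr)
      assume "\<not> ?thesis"
      then have "P - b < r - s" by simp
      moreover have "P + b \<le> r + s" using Pr bs by simp
      moreover have "P + b > 0" using P0 b34 assms(2) by simp
      ultimately have "(P - b) * (P + b) < (r - s) * (P + b)" "(r - s) * (P + b) \<le> (r - s) * (r + s)"
        using rs by (simp_all add: mult_left_mono)
      then have "(P - b) * (P + b) < (r - s) * (r + s)" by linarith
      then show False using prod by simp
    qed
    have Pb2: "P - b < 2 * (r - s)"
    proof -
      have "r + s < 2 * (P + b)" using Pb b34 r2s rs by simp
      then have "(r - s) * (r + s) < (r - s) * (2 * (P + b))" using rs by simp
      then have "(P - b) * (P + b) < (2 * (r - s)) * (P + b)" using prod by (simp add: algebra_simps)
      moreover have "P + b > 0" using P0 b34 assms(2) by simp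
      ultimately show ?thesis by simp
    qed
    have ab: "a \<ge> b" using alo Pb dd by simp
    have apos: "a > 0" using ab b34 assms(2) by simp
    define w0 where "w0 = (v + of_real (b / a) * (ze - v), t)"
    have "cmod (of_real (b / a) * (ze - v)) = \<bar>b / a\<bar> * a"
      unfolding a_def by (simp only: norm_mult norm_of_real)
    then have n1: "norm (w0 - emb v) = sqrt ((\<bar>b / a\<bar> * a) ^ 2 + t ^ 2)"
      unfolding w0_def emb_def by (simp add: norm_Pair)
    have "(\<bar>b / a\<bar> * a) ^ 2 = b ^ 2" using apos b0 by (simp add: field_simps)
    then have "norm (w0 - emb v) = s" using n1 b2 assms(2) by simp
    then have w0in: "w0 \<in> Pi_disc v s" unfolding Pi_disc_def H3_def w0_def using t by simp
    have hw0: "hgt w0 = hgt z" unfolding w0_def z hgt_def by simp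
    have "ze - (v + of_real (b / a) * (ze - v)) = of_real (1 - b / a) * (ze - v)"
      by (simp add: algebra_simps)
    moreover have "cmod (1 - complex_of_real (b / a)) = \<bar>1 - b / a\<bar>"
      by (metis norm_of_real of_real_1 of_real_diff)
    ultimately have "norm (z - w0) = \<bar>1 - b / a\<bar> * a" unfolding z w0_def a_def
      by (simp add: norm_Pair norm_mult)
    also have "\<dots> = a - b" using apos ab by (simp add: field_simps)
    finally have "norm (z - w0) = a - b" .
    moreover have "norm (z - w) \<le> norm (z - w0)" using w(3) w0in hw0 by blast
    ultimately have "norm (z - w) \<le> a - b" by simp
    then show ?thesis using aup Pb2 dd by simp
  qed
  show ?thesis using ts hz part2 by auto
qed

end
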